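(* Let $M(n)$ denote the maximum cardinality of a set $\mathsf{B}\subseteq\{0,1\}^n$ such that any two distinct strings in $\mathsf{B}$ have a skewincidence. Then $$\lim_{n\to\infty}\frac{M(n)}{2^n}=1.$$
   Context: Two binary strings $\mathbf{x}=x_1\dots x_n$ and $\mathbf{y}=y_1\dots y_n$ in $\{0,1\}^n$ have a skew coincidence (skewincidence) if there is a coordinate $i\in[n-1]$ with $x_i=y_{i+1}=1$ or $x_{i+1}=y_i=1$. *)

theory Defs
  imports Complex_Main
begin

text \<open>Binary strings of length n are represented as boolean lists of length n
(True = 1), with positions indexed 0..n-1.\<close>

definition binstrings :: "nat \<Rightarrow> bool list set" where
  "binstrings n = {x. length x = n}"

definition skewincidence :: "bool list \<Rightarrow> bool list \<Rightarrow> bool" where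
  "skewincidence x y \<longleftrightarrow>
     (\<exists>i. Suc i < length x \<and> Suc i < length y \<and>
          ((x ! i \<and> y ! Suc i) \<or> (x ! Suc i \<and> y ! i)))"

definition skew_family :: "nat \<Rightarrow> bool list set \<Rightarrow> bool" where
  "skew_family n B \<longleftrightarrow> B \<subseteq> binstrings n \<and>
     (\<forall>x\<in>B. \<forall>y\<in>B. x \<noteq> y \<longrightarrow> skewincidence x y)"

definition M :: "nat \<Rightarrow> nat" where
  "M n = Max (card ` {B. skew_family n B})"

end

theory Submission
  imports Defs
begin

lemma skew_nil1[simp]: "\<not> skewincidence [] ys" by (simp add: skewincidence_def)
lemma skew_one1[simp]: "\<not> skewincidence [x] ys" by (simp add: skewincidence_def)

lemma ex_nat_split: "(\<exists>i::nat. Q i) \<longleftrightarrow> Q 0 \<or> (\<exists>j. Q (Suc j))"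
  by (metis not0_implies_Suc)

lemma skew_Cons2[simp]:
  "skewincidence (x#y#xs) (x'#y'#ys) \<longleftrightarrow> (x \<and> y' \<or> y \<and> x') \<or> skewincidence (y#xs) (y'#ys)"
  unfolding skewincidence_def by (subst ex_nat_split) auto

definition P :: "bool list \<Rightarrow> bool" where
  "P u \<longleftrightarrow> skewincidence u u \<and> u \<noteq> [True,True,False,False,False]"

lemma len5: "length u = 5 \<Longrightarrow> \<exists>a b c d e. u = [a,b,c,d,e]"
  by (simp add: eval_nat_numeral length_Suc_conv) blast

lemma clique5: "skewincidence [a,b,c,d,e] [a,b,c,d,e] \<Longrightarrow> skewincidence [a',b',c',d',e'] [a',b',c',d',e'] \<Longrightarrow>
  [a,b,c,d,e] \<noteq> [True,True,False,False,False] \<Longrightarrow> [a',b',c',d',e'] \<noteq> [True,True,False,False,False] \<Longrightarrow>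
  skewincidence [a,b,c,d,e] [a',b',c',d',e']"
  apply simp
  apply (cases a; cases b; cases c; cases d; cases e; simp; sat)
  done

lemma P_clique: "length u = 5 \<Longrightarrow> length u' = 5 \<Longrightarrow> P u \<Longrightarrow> P u' \<Longrightarrow> skewincidence u u'"
proof -
  assume a: "length u = 5" "length u' = 5" "P u" "P u'"
  obtain a b c d e where u: "u = [a,b,c,d,e]" using len5[OF a(1)] by blast
  obtain a' b' c' d' e' where u': "u' = [a',b',c',d',e']" using len5[OF a(2)] by blast
  show ?thesis using a(3,4) unfolding u u' P_def by (elim conjE) (rule clique5; assumption)
qed

lemma skew_app_right:
  assumes "skewincidence u u'" shows "skewincidence (u@v) (u'@v')"
proof -
  from assms obtain i where h: "Suc i < length u" "Suc i < length u'"
    "(u ! i \<and> u' ! Suc i) \<or> (u ! Suc i \<and> u' ! i)" unfolding skewincidence_def by blast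
  have "(u@v) ! i = u ! i" "(u@v) ! Suc i = u ! Suc i" "(u'@v') ! i = u' ! i" "(u'@v') ! Suc i = u' ! Suc i"
    using h(1,2) by (simp_all add: nth_append)
  moreover have "Suc i < length (u@v)" "Suc i < length (u'@v')" using h(1,2) by simp_all
  ultimately show ?thesis unfolding skewincidence_def using h(3) by metis
qed

lemma skew_app_left:
  assumes "length u = length u'" "skewincidence v v'" shows "skewincidence (u@v) (u'@v')"
proof -
  from assms(2) obtain i where h: "Suc i < length v" "Suc i < length v'"
    "(v ! i \<and> v' ! Suc i) \<or> (v ! Suc i \<and> v' ! i)" unfolding skewincidence_def by blast
  let ?j = "i + length u"
  have "(u@v) ! ?j = v ! i" "(u@v) ! Suc ?j = v ! Suc i" "(u'@v') ! ?j = v' ! i" "(u'@v') ! Suc ?j = v' ! Suc i"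
    using assms(1) by (simp_all add: nth_append)
  moreover have "Suc ?j < length (u@v)" "Suc ?j < length (u'@v')" using h(1,2) assms(1) by simp_all
  ultimately show ?thesis unfolding skewincidence_def using h(3) by blast
qed

fun g :: "bool list \<Rightarrow> nat" where
  "g xs = (if length xs < 5 then 0 else (if P (take 5 xs) then 1 else 0) + g (drop 5 xs))"

declare g.simps[simp del]

lemma g_short: "length xs < 5 \<Longrightarrow> g xs = 0" by (subst g.simps) simp

lemma g_app: "length u = 5 \<Longrightarrow> g (u@v) = (if P u then 1 else 0) + g v"
  by (subst g.simps) simp

lemma pigeon: "length x = length y \<Longrightarrow> length x div 5 < g x + g y \<Longrightarrow> skewincidence x y"
proof (induction x arbitrary: y rule: g.induct)
  case (1 x)
  show ?case
  proof (cases "length x < 5")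
    case True then show ?thesis using 1 by (simp add: g_short)
  next
    case False
    let ?u = "take 5 x" and ?v = "drop 5 x" and ?u' = "take 5 y" and ?v' = "drop 5 y"
    have x: "x = ?u @ ?v" and y: "y = ?u' @ ?v'" by simp_all
    have lu: "length ?u = 5" "length ?u' = 5" using False 1(2) by auto
    have gx: "g x = (if P ?u then 1 else 0) + g ?v" using g_app[OF lu(1), of ?v] by simp
    have gy: "g y = (if P ?u' then 1 else 0) + g ?v'" using g_app[OF lu(2), of ?v'] by simp
    show ?thesis
    proof (cases "P ?u \<and> P ?u'")
      case True
      then have "skewincidence ?u ?u'" using P_clique lu by blast
      then have "skewincidence (?u @ ?v) (?u' @ ?v')" by (rule skew_app_right)
      then show ?thesis by simp
    next
      case F: False
      have ld: "length ?v div 5 = length x div 5 - 1" using False by simp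
      have ge: "1 \<le> length x div 5" using False by simp
      have "(if P ?u then 1 else 0) + (if P ?u' then 1 else 0) \<le> (1::nat)" using F by auto
      then have "length ?v div 5 < g ?v + g ?v'" using 1(3) gx gy ld ge by linarith
      then have "skewincidence ?v ?v'" using 1(1)[OF False] 1(2) by simp
      then have "skewincidence (?u @ ?v) (?u' @ ?v')" using lu by (intro skew_app_left) simp_all
      then show ?thesis by simp
    qed
  qed
qed

lemma binstrings_eq: "binstrings n = {xs. set xs \<subseteq> UNIV \<and> length xs = n}"
  by (simp add: binstrings_def)

lemma finite_binstrings[simp]: "finite (binstrings n)"
  unfolding binstrings_eq by (rule finite_lists_length_eq) simp

lemma card_binstrings: "card (binstrings n) = 2 ^ n"
  unfolding binstrings_eq by (subst card_lists_length_eq) simp_all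

lemma binstrings_Suc: "binstrings (Suc n) = Cons True ` binstrings n \<union> Cons False ` binstrings n"
proof -
  have "x \<in> Cons True ` binstrings n \<union> Cons False ` binstrings n" if "length x = Suc n" for x
  proof (cases x)
    case (Cons a l)
    then show ?thesis using that by (cases a) (auto simp: binstrings_def)
  qed (use that in simp)
  then show ?thesis by (auto simp: binstrings_def)
qed

lemma sum_Suc: "(\<Sum>x\<in>binstrings (Suc n). f x) = (\<Sum>u\<in>binstrings n. f (True#u) + f (False#u))"
  unfolding binstrings_Suc
  by (subst sum.union_disjoint) (auto simp: sum.reindex sum.distrib)

lemma binstrings_0: "binstrings 0 = {[]}" by (auto simp: binstrings_def)

lemma sum_add: "(\<Sum>x\<in>binstrings (k+n). f x) = (\<Sum>u\<in>binstrings k. \<Sum>v\<in>binstrings n. f (u@v))"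
proof (induction k arbitrary: f)
  case 0 then show ?case by (simp add: binstrings_0)
next
  case (Suc k)
  have "(\<Sum>x\<in>binstrings (Suc k+n). f x) = (\<Sum>w\<in>binstrings (k+n). f (True#w) + f (False#w))"
    using sum_Suc[where n="k+n" and f=f] by simp
  also have "\<dots> = (\<Sum>u\<in>binstrings k. \<Sum>v\<in>binstrings n. f (True#u@v) + f (False#u@v))"
    using Suc.IH[of "\<lambda>w. f (True#w) + f (False#w)"] by simp
  also have "\<dots> = (\<Sum>u\<in>binstrings (Suc k). \<Sum>v\<in>binstrings n. f (u@v))"
    by (subst sum_Suc) (simp add: sum.distrib)
  finally show ?case .
qed

lemma block_sum: "(\<Sum>u\<in>binstrings 5. (t::real) ^ (if P u then 1 else 0)) = 18 * t + 14"
proof -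
  have e: "binstrings 5 = binstrings (Suc (Suc (Suc (Suc (Suc 0)))))" by (simp add: eval_nat_numeral)
  show ?thesis unfolding e sum_Suc binstrings_0 by (simp add: P_def)
qed

lemma gen: "(\<Sum>x\<in>binstrings n. (t::real) ^ g x) = (18*t+14)^(n div 5) * 2^(n mod 5)"
proof (induction n rule: less_induct)
  case (less n)
  show ?case
  proof (cases "n < 5")
    case True
    then have "(\<Sum>x\<in>binstrings n. t ^ g x) = card (binstrings n)"
      by (simp add: g_short binstrings_def)
    then show ?thesis using True by (simp add: card_binstrings)
  next
    case False
    then obtain k where n: "n = 5 + k" by (metis le_add_diff_inverse not_less)
    have "(\<Sum>x\<in>binstrings n. t ^ g x) = (\<Sum>u\<in>binstrings 5. \<Sum>v\<in>binstrings k. t ^ g (u@v))"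
      unfolding n by (rule sum_add)
    also have "\<dots> = (\<Sum>u\<in>binstrings 5. \<Sum>v\<in>binstrings k. t ^ (if P u then 1 else 0) * t ^ g v)"
      by (intro sum.cong refl) (simp add: g_app binstrings_def power_add)
    also have "\<dots> = (\<Sum>u\<in>binstrings 5. t ^ (if P u then 1 else 0)) * (\<Sum>v\<in>binstrings k. t ^ g v)"
      by (simp add: sum_product)
    also have "\<dots> = (18*t+14) * ((18*t+14)^(k div 5) * 2^(k mod 5))"
      using block_sum less[of k] n by simp
    also have "\<dots> = (18*t+14)^(n div 5) * 2^(n mod 5)"
      using n by simp
    finally show ?thesis .
  qed
qed

definition Good :: "nat \<Rightarrow> bool list set" where
  "Good n = {x \<in> binstrings n. n div 5 < 2 * g x}"

lemma good_family: "skew_family n (Good n)"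
  unfolding skew_family_def Good_def
  by (auto simp: binstrings_def intro!: pigeon)

lemma bad_bound:
  "real (card (binstrings n - Good n)) * (7/8)^(n div 5) \<le> (18*(49/64)+14)^(n div 5) * 2^(n mod 5)"
proof -
  let ?m = "n div 5" and ?B = "binstrings n - Good n"
  have "real (card ?B) * (7/8)^?m = (\<Sum>x\<in>?B. (7/8::real)^?m)" by simp
  also have "\<dots> \<le> (\<Sum>x\<in>?B. (49/64::real)^g x)"
  proof (rule sum_mono)
    fix x assume "x \<in> ?B"
    then have "2 * g x \<le> ?m" by (auto simp: Good_def)
    then have "(7/8::real)^?m \<le> (7/8)^(2 * g x)" by (intro power_decreasing) auto
    also have "\<dots> = (49/64)^g x" by (simp add: power_mult power2_eq_square)
    finally show "(7/8::real)^?m \<le> (49/64)^g x" .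
  qed
  also have "\<dots> \<le> (\<Sum>x\<in>binstrings n. (49/64::real)^g x)"
    by (intro sum_mono2) auto
  also have "\<dots> = (18*(49/64)+14)^?m * 2^(n mod 5)" by (rule gen)
  finally show ?thesis .
qed

lemma card_good: "real (card (Good n)) \<ge> 2^n * (1 - (889/896)^(n div 5))"
proof -
  let ?m = "n div 5"
  have sub: "Good n \<subseteq> binstrings n" by (auto simp: Good_def)
  have cb: "real (card (binstrings n - Good n)) = 2^n - real (card (Good n))"
    using card_Diff_subset[OF finite_subset[OF sub] sub] card_mono[OF _ sub]
    by (simp add: card_binstrings of_nat_diff)
  have n: "(2::real)^n = 32^?m * 2^(n mod 5)"
  proof -
    have "(2::real)^n = 2^(5*?m + n mod 5)" by simp
    also have "\<dots> = (2^5)^?m * 2^(n mod 5)" unfolding power_add power_mult by simp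
    also have "\<dots> = 32^?m * 2^(n mod 5)" by simp
    finally show ?thesis .
  qed
  have "real (card (binstrings n - Good n)) * (7/8)^?m \<le> (18*(49/64)+14)^?m * 2^(n mod 5)"
    by (rule bad_bound)
  also have "(18*(49/64)+14::real)^?m = (889/896)^?m * (28)^?m"
    by (simp add: power_mult_distrib[symmetric])
  finally have "real (card (binstrings n - Good n)) * (7/8)^?m \<le> (889/896)^?m * 28^?m * 2^(n mod 5)" .
  moreover have "(28::real)^?m = 32^?m * (7/8)^?m" by (simp add: power_mult_distrib[symmetric])
  ultimately have "real (card (binstrings n - Good n)) * (7/8)^?m \<le> ((889/896)^?m * 2^n) * (7/8)^?m"
    using n by (simp add: algebra_simps)
  then have "real (card (binstrings n - Good n)) \<le> (889/896)^?m * 2^n"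
    by (rule mult_right_le_imp_le) simp
  then show ?thesis using cb by (simp add: algebra_simps)
qed

lemma M_bounds: "card (Good n) \<le> M n" "M n \<le> 2^n"
proof -
  have fin: "finite {B. skew_family n B}"
    by (rule finite_subset[of _ "Pow (binstrings n)"]) (auto simp: skew_family_def)
  show "card (Good n) \<le> M n" unfolding M_def
    using fin good_family by (intro Max_ge) auto
  have "card B \<le> 2^n" if "skew_family n B" for B
    using that card_mono[of "binstrings n" B] by (auto simp: skew_family_def card_binstrings)
  then show "M n \<le> 2^n" unfolding M_def using fin good_family
    by (subst Max_le_iff) auto
qed

theorem corollary1:
  shows "(\<lambda>n. real (M n) / 2 ^ n) \<longlonglongrightarrow> 1"
proof (rule tendsto_sandwich[of "\<lambda>n. 1 - (889/896::real)^(n div 5)" _ _ "\<lambda>n. 1"])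
  show "\<forall>\<^sub>F n in sequentially. 1 - (889/896::real)^(n div 5) \<le> real (M n) / 2 ^ n"
  proof (rule always_eventually, rule allI)
    fix n
    have "2^n * (1 - (889/896::real)^(n div 5)) \<le> real (M n)"
      using card_good[of n] M_bounds(1)[of n] by linarith
    then show "1 - (889/896::real)^(n div 5) \<le> real (M n) / 2 ^ n"
      by (simp add: field_simps)
  qed
  show "\<forall>\<^sub>F n in sequentially. real (M n) / 2 ^ n \<le> 1"
  proof (rule always_eventually, rule allI)
    fix n
    have "real (M n) \<le> 2^n" using M_bounds(2)[of n]
      by (metis of_nat_le_iff of_nat_numeral of_nat_power)
    then show "real (M n) / 2 ^ n \<le> 1" by simp
  qed
  show "(\<lambda>n. 1::real) \<longlonglongrightarrow> 1" by simp
  have d: "filterlim (\<lambda>n::nat. n div 5) sequentially sequentially"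
    unfolding filterlim_at_top eventually_sequentially
  proof (intro allI)
    fix Z :: nat show "\<exists>N. \<forall>n\<ge>N. Z \<le> n div 5"
      by (rule exI[of _ "5*Z"]) auto
  qed
  have "(\<lambda>n. (889/896::real)^(n div 5)) \<longlonglongrightarrow> 0"
    by (rule filterlim_compose[OF LIMSEQ_power_zero d]) simp
  then show "(\<lambda>n. 1 - (889/896::real)^(n div 5)) \<longlonglongrightarrow> 1"
    using tendsto_diff[OF tendsto_const[of 1]] by fastforce
qed

end
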